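(* If $C\subseteq\mathbb{R}$ is infinite and $|\mathbb{R}\setminus C|=\mathfrak{c}$, then there is a two-point selection $f$ on $\mathbb{R}$ such that $C$ is neither open nor closed in the topology $\tau_f$.
   Context: $\mathfrak{c}=|\mathbb{R}|$. A two-point selection on $\mathbb{R}$ is a function $f$ from the set of two-element subsets of $\mathbb{R}$ to $\mathbb{R}$ with $f(F)\in F$. Write $r<_f s$ if $f(\{r,s\})=r$ ($r\ne s$), $(\leftarrow,r)_f=\{x: x<_f r\}$, $(r,\rightarrow)_f=\{x: r<_f x\}$. The topology $\tau_f$ on $\mathbb{R}$ is generated (as a subbase) by all sets $(\leftarrow,r)_f$, $(r,\rightarrow)_f$, $r\in\mathbb{R}$. *)

theory Defs
  imports "HOL-Analysis.Analysis" "HOL-Library.Equipollence"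
begin

text \<open>A two-point selection on the reals: a function on sets whose value on every
  two-element set lies in that set (its values on other sets are irrelevant).\<close>
definition two_point_selection :: "(real set \<Rightarrow> real) \<Rightarrow> bool" where
  "two_point_selection f \<longleftrightarrow> (\<forall>r s. r \<noteq> s \<longrightarrow> f {r, s} \<in> {r, s})"

definition sel_less :: "(real set \<Rightarrow> real) \<Rightarrow> real \<Rightarrow> real \<Rightarrow> bool" where
  "sel_less f r s \<longleftrightarrow> r \<noteq> s \<and> f {r, s} = r"

definition sel_left_ray :: "(real set \<Rightarrow> real) \<Rightarrow> real \<Rightarrow> real set" where
  "sel_left_ray f r = {x. sel_less f x r}"

definition sel_right_ray :: "(real set \<Rightarrow> real) \<Rightarrow> real \<Rightarrow> real set" where
  "sel_right_ray f r = {x. sel_less f r x}"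

definition sel_topology :: "(real set \<Rightarrow> real) \<Rightarrow> real topology" where
  "sel_topology f = topology_generated_by
     ((\<lambda>r. sel_left_ray f r) ` UNIV \<union> (\<lambda>r. sel_right_ray f r) ` UNIV)"

end

theory Submission
  imports Defs
begin

lemma gen_prop:
  assumes "generate_topology_on S U"
    and "\<And>T. T \<in> S \<Longrightarrow> P T"
    and "\<And>A B. P A \<Longrightarrow> P B \<Longrightarrow> P (A \<inter> B)"
    and "\<And>K. (\<And>k. k \<in> K \<Longrightarrow> P k) \<Longrightarrow> P (\<Union>K)"
  shows "P U"
  using assms(1)
proof (induction rule: generate_topology_on.induct)
  case Empty
  then show ?case using assms(4)[of "{}"] by simp
next
  case (Int a b)
  then show ?case using assms(3) by blast
next
  case (UN K)
  then show ?case using assms(4) by blast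
next
  case (Basis s)
  then show ?case using assms(2) by blast
qed

definition selg :: "(real \<Rightarrow> real) \<Rightarrow> real set \<Rightarrow> real" where
  "selg g S = (THE x. x \<in> S \<and> (\<forall>y\<in>S. g x \<le> g y))"

lemma selg_two:
  assumes "inj g" "r \<noteq> s"
  shows "selg g {r, s} = (if g r < g s then r else s)"
proof -
  have ne: "g r \<noteq> g s" using assms by (meson injD)
  show ?thesis
  proof (cases "g r < g s")
    case True
    have "selg g {r, s} = r" unfolding selg_def
      by (rule the_equality) (use True ne in auto)
    then show ?thesis using True by simp
  next
    case False
    have "selg g {r, s} = s" unfolding selg_def
      by (rule the_equality) (use False ne in auto)
    then show ?thesis using False by simp
  qed
qed

lemma selg_less:
  assumes "inj g"
  shows "sel_less (selg g) x y \<longleftrightarrow> g x < g y"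
proof (cases "x = y")
  case True then show ?thesis by (simp add: sel_less_def)
next
  case False
  have ne: "g x \<noteq> g y" using assms False by (meson injD)
  show ?thesis using selg_two[OF assms False] False ne by (auto simp: sel_less_def)
qed

lemma selg_tps: "inj g \<Longrightarrow> two_point_selection (selg g)"
  unfolding two_point_selection_def using selg_two by auto

theorem theorem3p15:
  fixes C :: "real set"
  assumes "infinite C"
    and "(UNIV - C) \<approx> (UNIV :: real set)"
  shows "\<exists>f. two_point_selection f \<and>
           \<not> openin (sel_topology f) C \<and> \<not> closedin (sel_topology f) C"
proof -
  obtain a :: "nat \<Rightarrow> real" where ainj: "inj a" and aC: "range a \<subseteq> C"
    using infinite_countable_subset[OF assms(1)] by blast
  have "infinite (UNIV - C)"
    using assms(2) eqpoll_finite_iff infinite_UNIV_char_0 by blast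
  then obtain b :: "nat \<Rightarrow> real" where binj: "inj b" and bC: "range b \<subseteq> UNIV - C"
    using infinite_countable_subset by blast
  define ga :: "nat \<Rightarrow> real" where "ga n = real n / (real n + 1)" for n
  define gb :: "nat \<Rightarrow> real" where "gb n = (if n = 0 then 1 else - 1 / (real n + 1))" for n
  define g where "g x = (if x \<in> range a then ga (inv a x)
      else if x \<in> range b then gb (inv b x) else - 1 - exp x)" for x
  have ga_inj: "ga m = ga n \<Longrightarrow> m = n" for m n
    unfolding ga_def by (simp add: divide_simps algebra_simps)
  have gb_inj: "gb m = gb n \<Longrightarrow> m = n" for m n
    unfolding gb_def by (auto simp: divide_simps split: if_splits)
  have ga_rng: "0 \<le> ga n \<and> ga n < 1" for n unfolding ga_def by (simp add: divide_simps)
  have gb_rng: "gb n = 1 \<or> (- 1 / 2 \<le> gb n \<and> gb n < 0)" for n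
    unfolding gb_def by (auto simp: divide_simps)
  have disj: "a m \<noteq> b n" for m n using aC bC by blast
  have ga_a: "g (a n) = ga n" for n using ainj by (simp add: g_def)
  have gb_b: "g (b n) = gb n" for n using binj disj by (auto simp: g_def) (metis disj)
  have oth: "z \<notin> range a \<Longrightarrow> z \<notin> range b \<Longrightarrow> g z < -1" for z
    using exp_gt_zero[of z] by (simp add: g_def)
  have gcases: "(\<exists>k. z = a k \<and> g z = ga k) \<or> (\<exists>k. z = b k \<and> g z = gb k) \<or> g z < -1" for z
  proof (cases "z \<in> range a")
    case True then show ?thesis using ga_a by auto
  next
    case False
    show ?thesis
    proof (cases "z \<in> range b")
      case True then show ?thesis using gb_b by auto
    next
      case F2: False then show ?thesis using oth False by blast
    qed
  qed
  have ra: "0 \<le> g z" if "z \<in> range a" for z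
    using that ga_rng by (auto simp: ga_a)
  have rb: "- 1 / 2 \<le> g z" if zb: "z \<in> range b" for z
  proof -
    obtain k where "z = b k" using zb by blast
    then show ?thesis using gb_rng[of k] by (auto simp: gb_b)
  qed
  have ginj: "inj g"
  proof (rule injI)
    fix x y assume eq: "g x = g y"
    show "x = y"
      using gcases[of x] gcases[of y]
    proof (elim disjE exE conjE)
      fix m k assume "x = a m" "g x = ga m" "y = a k" "g y = ga k"
      then have "ga m = ga k" using eq by simp
      then show ?thesis using ga_inj `x = a m` `y = a k` by metis
    next
      fix m k assume "x = b m" "g x = gb m" "y = b k" "g y = gb k"
      then have "gb m = gb k" using eq by simp
      then show ?thesis using gb_inj `x = b m` `y = b k` by metis
    next
      fix m k assume "g x = ga m" "g y = gb k"
      then show ?thesis using eq ga_rng[of m] gb_rng[of k] by linarith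
    next
      fix m k assume "g x = gb m" "g y = ga k"
      then show ?thesis using eq ga_rng[of k] gb_rng[of m] by linarith
    next
      fix m assume "g x = ga m" "g y < -1"
      then show ?thesis using eq ga_rng[of m] by linarith
    next
      fix m assume "g x = gb m" "g y < -1"
      then show ?thesis using eq gb_rng[of m] by linarith
    next
      fix m assume "g y = ga m" "g x < -1"
      then show ?thesis using eq ga_rng[of m] by linarith
    next
      fix m assume "g y = gb m" "g x < -1"
      then show ?thesis using eq gb_rng[of m] by linarith
    next
      assume "g x < -1" "g y < -1"
      then have "x \<notin> range a" "x \<notin> range b" "y \<notin> range a" "y \<notin> range b"
        using ra[of x] rb[of x] ra[of y] rb[of y] by linarith+
      then show ?thesis using eq by (simp add: g_def)
    qed
  qed
  define f where "f = selg g"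
  have sl: "sel_less f x y \<longleftrightarrow> g x < g y" for x y
    unfolding f_def using selg_less[OF ginj] .
  define P where "P T \<longleftrightarrow> (a 0 \<in> T \<longrightarrow> eventually (\<lambda>n. b (Suc n) \<in> T) sequentially)
       \<and> (b 0 \<in> T \<longrightarrow> eventually (\<lambda>n. a n \<in> T) sequentially)" for T
  have g_a0: "g (a 0) = 0" using ga_a ga_def by simp
  have g_b0: "g (b 0) = 1" using gb_b gb_def by simp
  have g_bS: "g (b (Suc n)) = - 1 / (real n + 2)" for n using gb_b gb_def
    by (simp add: add.commute)
  have g_an: "g (a n) = real n / (real n + 1)" for n using ga_a ga_def by simp
  have evb: "eventually (\<lambda>n. t < g (b (Suc n))) sequentially" if "t < 0" for t
  proof -
    obtain N :: nat where N: "- 1 / t < real N" using reals_Archimedean2 by blast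
    show ?thesis unfolding eventually_sequentially
    proof (intro exI allI impI)
      fix n assume "N \<le> n"
      then have "- 1 / t < real n + 2" using N by linarith
      then show "t < g (b (Suc n))" using that unfolding g_bS
        by (simp add: divide_simps mult.commute)
    qed
  qed
  have eva: "eventually (\<lambda>n. t < g (a n)) sequentially" if "t < 1" for t
  proof -
    obtain N :: nat where N: "1 / (1 - t) < real N" using reals_Archimedean2 by blast
    show ?thesis unfolding eventually_sequentially
    proof (intro exI allI impI)
      fix n assume "N \<le> n"
      then have "1 / (1 - t) < real n + 1" using N by linarith
      then have h1: "1 < (real n + 1) * (1 - t)" using that by (simp add: divide_less_eq)
      have "(real n + 1) * (1 - t) = real n + 1 - t * (real n + 1)" by (simp add: algebra_simps)
      then have "t * (real n + 1) < real n" using h1 by linarith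
      then show "t < g (a n)" unfolding g_an by (simp add: less_divide_eq)
    qed
  qed
  have Pbasis: "P T" if "T \<in> (\<lambda>r. sel_left_ray f r) ` UNIV \<union> (\<lambda>r. sel_right_ray f r) ` UNIV" for T
    using that
  proof
    assume "T \<in> (\<lambda>r. sel_left_ray f r) ` UNIV"
    then obtain r where T: "T = {x. g x < g r}" by (auto simp: sel_left_ray_def sl)
    have h1: "g (b (Suc n)) < 0" for n unfolding g_bS by simp
    have h2: "g (a n) < 1" for n unfolding g_an by simp
    show "P T" unfolding P_def T
    proof (intro conjI impI always_eventually allI)
      fix n assume "a 0 \<in> {x. g x < g r}"
      then show "b (Suc n) \<in> {x. g x < g r}" using h1[of n] g_a0 by simp
    next
      fix n assume "b 0 \<in> {x. g x < g r}"
      then show "a n \<in> {x. g x < g r}" using h2[of n] g_b0 by simp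
    qed
  next
    assume "T \<in> (\<lambda>r. sel_right_ray f r) ` UNIV"
    then obtain r where T: "T = {x. g r < g x}" by (auto simp: sel_right_ray_def sl)
    show "P T" unfolding P_def T using g_a0 g_b0 evb eva by auto
  qed
  have Pint: "P A \<Longrightarrow> P B \<Longrightarrow> P (A \<inter> B)" for A B
  proof -
    assume A: "P A" and B: "P B"
    show "P (A \<inter> B)" unfolding P_def
    proof (intro conjI impI)
      assume "a 0 \<in> A \<inter> B"
      then have "eventually (\<lambda>n. b (Suc n) \<in> A) sequentially"
        "eventually (\<lambda>n. b (Suc n) \<in> B) sequentially" using A B unfolding P_def by auto
      then show "eventually (\<lambda>n. b (Suc n) \<in> A \<inter> B) sequentially"
        by (simp add: eventually_conj)
    next
      assume "b 0 \<in> A \<inter> B"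
      then have "eventually (\<lambda>n. a n \<in> A) sequentially"
        "eventually (\<lambda>n. a n \<in> B) sequentially" using A B unfolding P_def by auto
      then show "eventually (\<lambda>n. a n \<in> A \<inter> B) sequentially"
        by (simp add: eventually_conj)
    qed
  qed
  have Pun: "P (\<Union>K)" if "\<And>k. k \<in> K \<Longrightarrow> P k" for K
    unfolding P_def
  proof (intro conjI impI)
    assume "a 0 \<in> \<Union>K"
    then obtain k where "k \<in> K" "a 0 \<in> k" by blast
    then have "eventually (\<lambda>n. b (Suc n) \<in> k) sequentially" using that[of k] unfolding P_def by blast
    then show "\<forall>\<^sub>F n in sequentially. b (Suc n) \<in> \<Union> K"
      by (rule eventually_mono) (use \<open>k \<in> K\<close> in blast)
  next
    assume "b 0 \<in> \<Union>K"
    then obtain k where "k \<in> K" "b 0 \<in> k" by blast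
    then have "eventually (\<lambda>n. a n \<in> k) sequentially" using that[of k] unfolding P_def by blast
    then show "\<forall>\<^sub>F n in sequentially. a n \<in> \<Union> K"
      by (rule eventually_mono) (use \<open>k \<in> K\<close> in blast)
  qed
  have Popen: "P U" if "openin (sel_topology f) U" for U
    using that unfolding sel_topology_def openin_topology_generated_by_iff
  proof (rule gen_prop)
    show "\<And>T. T \<in> (\<lambda>r. sel_left_ray f r) ` UNIV \<union> (\<lambda>r. sel_right_ray f r) ` UNIV \<Longrightarrow> P T"
      by (rule Pbasis)
    show "\<And>A B. P A \<Longrightarrow> P B \<Longrightarrow> P (A \<inter> B)" by (rule Pint)
    show "\<And>K. (\<And>k. k \<in> K \<Longrightarrow> P k) \<Longrightarrow> P (\<Union>K)" by (rule Pun)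
  qed
  have notopen: "\<not> openin (sel_topology f) C"
  proof
    assume "openin (sel_topology f) C"
    then have "P C" by (rule Popen)
    moreover have "a 0 \<in> C" using aC by blast
    ultimately have "eventually (\<lambda>n. b (Suc n) \<in> C) sequentially" unfolding P_def by blast
    then obtain N where "\<forall>n\<ge>N. b (Suc n) \<in> C" unfolding eventually_sequentially by blast
    then have "b (Suc N) \<in> C" by simp
    then show False using bC by blast
  qed
  have notclosed: "\<not> closedin (sel_topology f) C"
  proof
    assume "closedin (sel_topology f) C"
    then have op: "openin (sel_topology f) (topspace (sel_topology f) - C)"
      by (simp add: closedin_def)
    have "b 0 \<in> sel_right_ray f (a 0)" using g_a0 g_b0 by (simp add: sel_right_ray_def sl)
    then have "b 0 \<in> topspace (sel_topology f)" unfolding sel_topology_def by auto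
    moreover have "b 0 \<notin> C" using bC by blast
    ultimately have "eventually (\<lambda>n. a n \<in> topspace (sel_topology f) - C) sequentially"
      using Popen[OF op] unfolding P_def by blast
    then obtain N where "\<forall>n\<ge>N. a n \<in> topspace (sel_topology f) - C" unfolding eventually_sequentially by blast
    then have "a N \<notin> C" by simp
    then show False using aC by blast
  qed
  show ?thesis using selg_tps[OF ginj] notopen notclosed unfolding f_def by blast
qed

end
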